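(* Let $(G,T)$ be a terminal graph that is the join of terminal graphs $(G_1,T)$ and $(G_2,T)$, and let $k$ be a positive integer. Let $(H_1,\ell_1)=\mathcal{C}^c_k(G_1,T)$ and $(H_2,\ell_2)=\mathcal{C}^c_k(G_2,T)$. Construct a labeled graph $(H,\ell)$ as follows: for every pair of nodes $x\in V(H_1)$, $y\in V(H_2)$ with $\ell_1(x)=\ell_2(y)$ introduce a node $(x,y)$ with $\ell((x,y))=\ell_1(x)$; add an edge between two distinct nodes $(x,y)$ and $(x',y')$ if and only if $xx'$ is an edge of $H_1$ and $yy'$ is an edge of $H_2$. Then $(H,\ell)=\mathcal{C}^c_k(G,T)$. Moreover, given certificates for $(H_1,\ell_1)$ and $(H_2,\ell_2)$, there is a certificate for $(H,\ell)$ such that for every $k$-coloring $\gamma$ of $G$, if $x$ is the $\gamma|_{V(G_1)}$-node of $H_1$ and $y$ is the $\gamma|_{V(G_2)}$-node of $H_2$, then $(x,y)$ is the $\gamma$-node of $H$.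
   Context: A terminal graph $(G,T)$ is a graph with $T\subseteq V(G)$. $(G,T)$ is the join of $(G_1,T)$ and $(G_2,T)$ if $G_1,G_2$ are induced subgraphs of $G$, $V(G_1)\cap V(G_2)=T$, $V(G_1)\cup V(G_2)=V(G)$, $V(G_1)\ne T$, $V(G_2)\ne T$, and every edge of $G$ lies in $G_1$ or $G_2$. A $k$-coloring of $G$ is a map $\alpha:V(G)\to\{1,\dots,k\}$ with $\alpha(u)\ne\alpha(w)$ for all edges $uw$. $\mathcal{C}_k(G)$ has the $k$-colorings as nodes, adjacent iff they differ on exactly one vertex. For $T\subseteq V(G)$, label each coloring $\gamma$ by $\gamma|_T$. A label component is a maximal set of colorings with the same label inducing a connected subgraph of $\mathcal{C}_k(G)$. The contracted solution graph $\mathcal{C}^c_k(G,T)=(H,\ell)$ has one node $x$ per label component $S_x$, distinct $x,y$ adjacent iff some $\gamma\in S_x,\gamma'\in S_y$ are adjacent in $\mathcal{C}_k(G)$, and $\ell(x)$ the common label on $S_x$; labeled graphs are identified up to label-preserving isomorphism. A certificate for $(H,\ell)$ is an assignment of nonempty sets $S_x$ of $k$-colorings of $G$ to the nodes such that: the $S_x$ partition the $k$-colorings; $\gamma|_T=\ell(x)$ for $\gamma\in S_x$; adjacent nodes have distinct labels; each $S_x$ induces a connected subgraph of $\mathcal{C}_k(G)$; distinct $x,y$ are adjacent iff some $\gamma\in S_x$ and $\gamma'\in S_y$ are adjacent in $\mathcal{C}_k(G)$. The $\gamma$-node with respect to a certificate $S$ is the node $x$ with $\gamma\in S_x$. *)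

theory Defs
  imports "HOL-Library.FuncSet"
begin

definition graph :: "'v set \<Rightarrow> ('v \<times> 'v) set \<Rightarrow> bool" where
  "graph V E \<longleftrightarrow> finite V \<and> E \<subseteq> V \<times> V \<and> sym E \<and> irrefl E"

definition induced_sub :: "'v set \<Rightarrow> ('v \<times> 'v) set \<Rightarrow> 'v set \<Rightarrow> ('v \<times> 'v) set \<Rightarrow> bool" where
  "induced_sub V E V1 E1 \<longleftrightarrow> V1 \<subseteq> V \<and> E1 = E \<inter> (V1 \<times> V1)"

definition is_join :: "'v set \<Rightarrow> ('v \<times> 'v) set \<Rightarrow> 'v set \<Rightarrow>
    'v set \<Rightarrow> ('v \<times> 'v) set \<Rightarrow> 'v set \<Rightarrow> ('v \<times> 'v) set \<Rightarrow> bool" where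
  "is_join V E T V1 E1 V2 E2 \<longleftrightarrow> graph V E \<and> T \<subseteq> V \<and>
     induced_sub V E V1 E1 \<and> induced_sub V E V2 E2 \<and>
     V1 \<inter> V2 = T \<and> V1 \<union> V2 = V \<and> V1 \<noteq> T \<and> V2 \<noteq> T \<and> E \<subseteq> E1 \<union> E2"

definition colorings :: "nat \<Rightarrow> 'v set \<Rightarrow> ('v \<times> 'v) set \<Rightarrow> ('v \<Rightarrow> nat) set" where
  "colorings k V E = {\<alpha> \<in> V \<rightarrow>\<^sub>E {1..k}. \<forall>(u, w) \<in> E. \<alpha> u \<noteq> \<alpha> w}"

definition col_adj :: "'v set \<Rightarrow> ('v \<Rightarrow> nat) \<Rightarrow> ('v \<Rightarrow> nat) \<Rightarrow> bool" where
  "col_adj V \<alpha> \<beta> \<longleftrightarrow> card {v \<in> V. \<alpha> v \<noteq> \<beta> v} = 1"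

definition induces_connected :: "'v set \<Rightarrow> ('v \<Rightarrow> nat) set \<Rightarrow> bool" where
  "induces_connected V S \<longleftrightarrow>
     (\<forall>\<gamma>\<in>S. \<forall>\<gamma>'\<in>S. (\<gamma>, \<gamma>') \<in> {(a, b). a \<in> S \<and> b \<in> S \<and> col_adj V a b}\<^sup>*)"

definition same_label :: "'v set \<Rightarrow> ('v \<Rightarrow> nat) set \<Rightarrow> bool" where
  "same_label T S \<longleftrightarrow> (\<exists>L. \<forall>\<gamma>\<in>S. restrict \<gamma> T = L)"

definition is_label_component :: "nat \<Rightarrow> 'v set \<Rightarrow> ('v \<times> 'v) set \<Rightarrow> 'v set \<Rightarrow> ('v \<Rightarrow> nat) set \<Rightarrow> bool" where
  "is_label_component k V E T S \<longleftrightarrow>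
     S \<noteq> {} \<and> S \<subseteq> colorings k V E \<and> same_label T S \<and> induces_connected V S \<and>
     (\<forall>S'. S \<subseteq> S' \<and> S' \<subseteq> colorings k V E \<and> same_label T S' \<and> induces_connected V S' \<longrightarrow> S' = S)"

definition csg_nodes :: "nat \<Rightarrow> 'v set \<Rightarrow> ('v \<times> 'v) set \<Rightarrow> 'v set \<Rightarrow> ('v \<Rightarrow> nat) set set" where
  "csg_nodes k V E T = {S. is_label_component k V E T S}"

definition csg_edges :: "nat \<Rightarrow> 'v set \<Rightarrow> ('v \<times> 'v) set \<Rightarrow> 'v set \<Rightarrow> (('v \<Rightarrow> nat) set \<times> ('v \<Rightarrow> nat) set) set" where
  "csg_edges k V E T = {(S, S'). S \<in> csg_nodes k V E T \<and> S' \<in> csg_nodes k V E T \<and> S \<noteq> S' \<and>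
      (\<exists>\<gamma>\<in>S. \<exists>\<gamma>'\<in>S'. col_adj V \<gamma> \<gamma>')}"

definition csg_label :: "'v set \<Rightarrow> ('v \<Rightarrow> nat) set \<Rightarrow> ('v \<Rightarrow> nat)" where
  "csg_label T S = restrict (SOME \<gamma>. \<gamma> \<in> S) T"

definition lgraph :: "'n set \<Rightarrow> ('n \<times> 'n) set \<Rightarrow> bool" where
  "lgraph N A \<longleftrightarrow> finite N \<and> A \<subseteq> N \<times> N \<and> sym A \<and> irrefl A"

definition lg_iso :: "'n set \<Rightarrow> ('n \<times> 'n) set \<Rightarrow> ('n \<Rightarrow> 'l) \<Rightarrow>
    'm set \<Rightarrow> ('m \<times> 'm) set \<Rightarrow> ('m \<Rightarrow> 'l) \<Rightarrow> bool" where
  "lg_iso N A l N' A' l' \<longleftrightarrow> (\<exists>f. bij_betw f N N' \<and>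
      (\<forall>x\<in>N. \<forall>y\<in>N. (x, y) \<in> A \<longleftrightarrow> (f x, f y) \<in> A') \<and> (\<forall>x\<in>N. l' (f x) = l x))"

definition is_certificate :: "nat \<Rightarrow> 'v set \<Rightarrow> ('v \<times> 'v) set \<Rightarrow> 'v set \<Rightarrow>
    'n set \<Rightarrow> ('n \<times> 'n) set \<Rightarrow> ('n \<Rightarrow> ('v \<Rightarrow> nat)) \<Rightarrow> ('n \<Rightarrow> ('v \<Rightarrow> nat) set) \<Rightarrow> bool" where
  "is_certificate k V E T N A l S \<longleftrightarrow>
     (\<forall>x\<in>N. S x \<noteq> {}) \<and>
     (\<Union>x\<in>N. S x) = colorings k V E \<and>
     (\<forall>x\<in>N. \<forall>y\<in>N. x \<noteq> y \<longrightarrow> S x \<inter> S y = {}) \<and>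
     (\<forall>x\<in>N. \<forall>\<gamma>\<in>S x. restrict \<gamma> T = l x) \<and>
     (\<forall>(x, y)\<in>A. l x \<noteq> l y) \<and>
     (\<forall>x\<in>N. induces_connected V (S x)) \<and>
     (\<forall>x\<in>N. \<forall>y\<in>N. x \<noteq> y \<longrightarrow> ((x, y) \<in> A \<longleftrightarrow> (\<exists>\<gamma>\<in>S x. \<exists>\<gamma>'\<in>S y. col_adj V \<gamma> \<gamma>')))"

definition prod_nodes :: "'a set \<Rightarrow> ('a \<Rightarrow> 'l) \<Rightarrow> 'b set \<Rightarrow> ('b \<Rightarrow> 'l) \<Rightarrow> ('a \<times> 'b) set" where
  "prod_nodes N1 l1 N2 l2 = {(x, y). x \<in> N1 \<and> y \<in> N2 \<and> l1 x = l2 y}"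

definition prod_edges :: "'a set \<Rightarrow> ('a \<times> 'a) set \<Rightarrow> ('a \<Rightarrow> 'l) \<Rightarrow>
    'b set \<Rightarrow> ('b \<times> 'b) set \<Rightarrow> ('b \<Rightarrow> 'l) \<Rightarrow> (('a \<times> 'b) \<times> ('a \<times> 'b)) set" where
  "prod_edges N1 A1 l1 N2 A2 l2 = {((x, y), (x', y')).
      (x, y) \<in> prod_nodes N1 l1 N2 l2 \<and> (x', y') \<in> prod_nodes N1 l1 N2 l2 \<and>
      (x, y) \<noteq> (x', y') \<and> (x, x') \<in> A1 \<and> (y, y') \<in> A2}"

definition prod_label :: "('a \<Rightarrow> 'l) \<Rightarrow> ('a \<times> 'b) \<Rightarrow> 'l" where
  "prod_label l1 p = l1 (fst p)"

end

theory Submission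
  imports Defs
begin

definition adjrel :: "'v set \<Rightarrow> ('v \<Rightarrow> nat) set \<Rightarrow> (('v \<Rightarrow> nat) \<times> ('v \<Rightarrow> nat)) set" where
  "adjrel V S = {(a, b). a \<in> S \<and> b \<in> S \<and> col_adj V a b}"

lemma ic_iff: "induces_connected V S \<longleftrightarrow> (\<forall>\<gamma>\<in>S. \<forall>\<gamma>'\<in>S. (\<gamma>, \<gamma>') \<in> (adjrel V S)\<^sup>*)"
  by (simp add: induces_connected_def adjrel_def)

lemma col_adj_sym: "col_adj V a b \<Longrightarrow> col_adj V b a"
proof -
  have "{v \<in> V. a v \<noteq> b v} = {v \<in> V. b v \<noteq> a v}" by auto
  then show "col_adj V a b \<Longrightarrow> col_adj V b a" by (simp add: col_adj_def)
qed

lemma adjrel_sym: "sym (adjrel V S)"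
  by (auto simp: adjrel_def sym_def intro: col_adj_sym)

lemma adjrel_mono: "S \<subseteq> S' \<Longrightarrow> adjrel V S \<subseteq> adjrel V S'"
  by (auto simp: adjrel_def)

lemma conn_union:
  assumes "induces_connected V S" "induces_connected V C" "a \<in> S" "b \<in> C" "a = b \<or> col_adj V a b"
  shows "induces_connected V (S \<union> C)"
  unfolding ic_iff
proof (intro ballI)
  let ?R = "adjrel V (S \<union> C)"
  have sy: "sym (?R\<^sup>*)" by (rule sym_rtrancl[OF adjrel_sym])
  have RS: "(adjrel V S)\<^sup>* \<subseteq> ?R\<^sup>*" by (rule rtrancl_mono) (rule adjrel_mono, blast)
  have RC: "(adjrel V C)\<^sup>* \<subseteq> ?R\<^sup>*" by (rule rtrancl_mono) (rule adjrel_mono, blast)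
  have ab: "(a, b) \<in> ?R\<^sup>*"
    using assms(3,4,5) by (auto simp: adjrel_def)
  have toa: "(u, a) \<in> ?R\<^sup>*" if "u \<in> S \<union> C" for u
  proof (cases "u \<in> S")
    case True
    then show ?thesis using assms(1,3) RS by (auto simp: ic_iff)
  next
    case False
    then have "u \<in> C" using that by blast
    then have "(u, b) \<in> ?R\<^sup>*" using assms(2,4) RC by (auto simp: ic_iff)
    moreover have "(b, a) \<in> ?R\<^sup>*" using ab sy by (auto simp: sym_def)
    ultimately show ?thesis by simp
  qed
  fix g g' assume "g \<in> S \<union> C" "g' \<in> S \<union> C"
  then have "(g, a) \<in> ?R\<^sup>*" "(g', a) \<in> ?R\<^sup>*" using toa by auto
  then show "(g, g') \<in> ?R\<^sup>*" using sy by (meson rtrancl_trans symD)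
qed

lemma same_label_union:
  assumes "same_label T S" "same_label T C" "g \<in> S" "g \<in> C"
  shows "same_label T (S \<union> C)"
  using assms unfolding same_label_def by (metis Un_iff)

lemma same_label_adj_union:
  assumes "same_label T S" "same_label T C" "a \<in> S" "b \<in> C" "restrict a T = restrict b T"
  shows "same_label T (S \<union> C)"
  using assms unfolding same_label_def by (metis Un_iff)

lemma cert_ne: "is_certificate k V E T N A l S \<Longrightarrow> x \<in> N \<Longrightarrow> S x \<noteq> {}"
  by (simp add: is_certificate_def)
lemma cert_union: "is_certificate k V E T N A l S \<Longrightarrow> (\<Union>x\<in>N. S x) = colorings k V E"
  by (simp add: is_certificate_def)
lemma cert_disj: "is_certificate k V E T N A l S \<Longrightarrow> x \<in> N \<Longrightarrow> y \<in> N \<Longrightarrow> x \<noteq> y \<Longrightarrow> S x \<inter> S y = {}"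
  by (simp add: is_certificate_def)
lemma cert_lab: "is_certificate k V E T N A l S \<Longrightarrow> x \<in> N \<Longrightarrow> g \<in> S x \<Longrightarrow> restrict g T = l x"
  by (simp add: is_certificate_def)
lemma cert_edgelab: "is_certificate k V E T N A l S \<Longrightarrow> (x, y) \<in> A \<Longrightarrow> l x \<noteq> l y"
  by (auto simp: is_certificate_def)
lemma cert_conn: "is_certificate k V E T N A l S \<Longrightarrow> x \<in> N \<Longrightarrow> induces_connected V (S x)"
  by (simp add: is_certificate_def)
lemma cert_adj: "is_certificate k V E T N A l S \<Longrightarrow> x \<in> N \<Longrightarrow> y \<in> N \<Longrightarrow> x \<noteq> y \<Longrightarrow>
   ((x, y) \<in> A \<longleftrightarrow> (\<exists>\<gamma>\<in>S x. \<exists>\<gamma>'\<in>S y. col_adj V \<gamma> \<gamma>'))"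
  by (simp add: is_certificate_def)

lemma cert_absorb:
  assumes cert: "is_certificate k V E T N A l S" and x: "x \<in> N"
    and C: "C \<subseteq> colorings k V E" "same_label T C" "induces_connected V C" "g \<in> C" "g \<in> S x"
  shows "C \<subseteq> S x"
proof
  fix d assume "d \<in> C"
  then have "(g, d) \<in> (adjrel V C)\<^sup>*" using C(3,4) by (auto simp: ic_iff)
  then show "d \<in> S x"
  proof (induction rule: rtrancl_induct)
    case base then show ?case using C(5) .
  next
    case (step a b)
    then have ab: "a \<in> C" "b \<in> C" "col_adj V a b" by (auto simp: adjrel_def)
    then have "b \<in> colorings k V E" using C(1) by blast
    then obtain y where y: "y \<in> N" "b \<in> S y" using cert_union[OF cert] by blast
    show ?case
    proof (cases "y = x")
      case True then show ?thesis using y by simp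
    next
      case False
      then have "(x, y) \<in> A" using cert_adj[OF cert x y(1)] step.IH y(2) ab(3) by auto
      then have "l x \<noteq> l y" by (rule cert_edgelab[OF cert])
      moreover have "restrict a T = l x" "restrict b T = l y"
        using cert_lab[OF cert] x y step.IH by auto
      moreover obtain L where "\<forall>g\<in>C. restrict g T = L" using C(2) by (auto simp: same_label_def)
      ultimately show ?thesis using ab by auto
    qed
  qed
qed

lemma cert_lc:
  assumes cert: "is_certificate k V E T N A l S" and x: "x \<in> N"
  shows "is_label_component k V E T (S x)"
proof -
  have sub: "S x \<subseteq> colorings k V E" using cert_union[OF cert] x by blast
  have sl: "same_label T (S x)" using cert_lab[OF cert x] by (auto simp: same_label_def)
  obtain g where g: "g \<in> S x" using cert_ne[OF cert x] by blast
  show ?thesis unfolding is_label_component_def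
    using cert_ne[OF cert x] sub sl cert_conn[OF cert x]
    using cert_absorb[OF cert x _ _ _ _ g] g by blast
qed

lemma cert_lc2:
  assumes cert: "is_certificate k V E T N A l S" and C: "is_label_component k V E T C"
  shows "\<exists>x\<in>N. C = S x"
proof -
  obtain g where g: "g \<in> C" using C by (auto simp: is_label_component_def)
  then have "g \<in> colorings k V E" using C by (auto simp: is_label_component_def)
  then obtain x where x: "x \<in> N" "g \<in> S x" using cert_union[OF cert] by blast
  have "C \<subseteq> S x" using cert_absorb[OF cert x(1) _ _ _ g x(2)] C
    by (auto simp: is_label_component_def)
  moreover have L: "is_label_component k V E T (S x)" by (rule cert_lc[OF cert x(1)])
  ultimately have "S x = C" using C unfolding is_label_component_def by blast
  then show ?thesis using x by auto
qed

lemma cert_iso: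
  assumes cert: "is_certificate k V E T N A l S"
  shows "lg_iso N A l (csg_nodes k V E T) (csg_edges k V E T) (csg_label T)"
  unfolding lg_iso_def
proof (intro exI conjI ballI)
  have inj: "inj_on S N"
  proof (rule inj_onI)
    fix x y assume "x \<in> N" "y \<in> N" "S x = S y"
    then show "x = y" using cert_disj[OF cert] cert_ne[OF cert] by fastforce
  qed
  moreover have "S ` N = csg_nodes k V E T"
    using cert_lc[OF cert] cert_lc2[OF cert] by (auto simp: csg_nodes_def)
  ultimately show "bij_betw S N (csg_nodes k V E T)" by (simp add: bij_betw_def)
  fix x y assume x: "x \<in> N" and y: "y \<in> N"
  show "(x, y) \<in> A \<longleftrightarrow> (S x, S y) \<in> csg_edges k V E T"
  proof (cases "x = y")
    case True
    then show ?thesis using cert_edgelab[OF cert, of x x] by (auto simp: csg_edges_def)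
  next
    case False
    then have "S x \<noteq> S y" using inj x y by (meson inj_on_def)
    then show ?thesis using cert_adj[OF cert x y False] cert_lc[OF cert] x y
      by (auto simp: csg_edges_def csg_nodes_def)
  qed
next
  fix x assume x: "x \<in> N"
  have "(SOME g. g \<in> S x) \<in> S x" using cert_ne[OF cert x] by (simp add: some_in_eq)
  then show "csg_label T (S x) = l x" using cert_lab[OF cert x] by (simp add: csg_label_def)
qed


section \<open>label components form a certificate\<close>

lemma comp_lc:
  assumes g: "g \<in> colorings k V E"
  shows "\<exists>C. is_label_component k V E T C \<and> g \<in> C"
proof -
  define R where "R = {(a, b). a \<in> colorings k V E \<and> b \<in> colorings k V E \<and>
     restrict a T = restrict g T \<and> restrict b T = restrict g T \<and> col_adj V a b}"
  define C where "C = {d. (g, d) \<in> R\<^sup>*}"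
  have gC: "g \<in> C" by (simp add: C_def)
  have inC: "d \<in> colorings k V E \<and> restrict d T = restrict g T" if "d \<in> C" for d
  proof -
    have "(g, d) \<in> R\<^sup>*" using that by (simp add: C_def)
    then show ?thesis
    proof (induction rule: rtrancl_induct)
      case base then show ?case using g by simp
    next
      case (step a b)
      from step.hyps(2) have "b \<in> colorings k V E" "restrict b T = restrict g T"
        unfolding R_def by blast+
      then show ?case by blast
    qed
  qed
  have sub: "C \<subseteq> colorings k V E" using inC by blast
  have sl: "same_label T C" unfolding same_label_def
    by (rule exI[of _ "restrict g T"]) (use inC in blast)
  have RC: "(g, d) \<in> (adjrel V C)\<^sup>*" if "(g, d) \<in> R\<^sup>*" for d
    using that
  proof (induction rule: rtrancl_induct)
    case base then show ?case by simp
  next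
    case (step a b)
    have "a \<in> C" "b \<in> C" unfolding C_def using step.hyps by (blast intro: rtrancl_into_rtrancl)+
    then have "(a, b) \<in> adjrel V C" using step.hyps(2) by (auto simp: adjrel_def R_def)
    then show ?case using step.IH by simp
  qed
  have conn: "induces_connected V C"
    unfolding ic_iff
  proof (intro ballI)
    fix a b assume "a \<in> C" "b \<in> C"
    then have "(g, a) \<in> (adjrel V C)\<^sup>*" "(g, b) \<in> (adjrel V C)\<^sup>*" using RC unfolding C_def by blast+
    moreover have "sym ((adjrel V C)\<^sup>*)" by (rule sym_rtrancl[OF adjrel_sym])
    ultimately show "(a, b) \<in> (adjrel V C)\<^sup>*" by (meson rtrancl_trans symD)
  qed
  have max: "S' = C" if h: "C \<subseteq> S'" "S' \<subseteq> colorings k V E" "same_label T S'" "induces_connected V S'" for S'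
  proof
    show "S' \<subseteq> C"
    proof
      fix d assume "d \<in> S'"
      have gS: "g \<in> S'" using h(1) gC by blast
      obtain L where L: "\<forall>x\<in>S'. restrict x T = L" using h(3) by (auto simp: same_label_def)
      have "adjrel V S' \<subseteq> R"
      proof clarify
        fix a b assume "(a, b) \<in> adjrel V S'"
        then have ab: "a \<in> S'" "b \<in> S'" "col_adj V a b" unfolding adjrel_def by blast+
        have "restrict a T = restrict g T" "restrict b T = restrict g T"
          using L ab gS by (metis, metis)
        moreover have "a \<in> colorings k V E" "b \<in> colorings k V E" using ab h(2) by blast+
        ultimately show "(a, b) \<in> R" using ab(3) unfolding R_def by blast
      qed
      then have "(adjrel V S')\<^sup>* \<subseteq> R\<^sup>*" by (rule rtrancl_mono)
      moreover have "(g, d) \<in> (adjrel V S')\<^sup>*" using h(4) gS \<open>d \<in> S'\<close> by (auto simp: ic_iff)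
      ultimately show "d \<in> C" unfolding C_def by blast
    qed
  qed (fact h(1))
  have "is_label_component k V E T C" unfolding is_label_component_def
  proof (intro conjI allI impI)
    show "C \<noteq> {}" using gC by blast
  next
    fix S' assume "C \<subseteq> S' \<and> S' \<subseteq> colorings k V E \<and> same_label T S' \<and> induces_connected V S'"
    then show "S' = C" using max by blast
  qed (fact sub sl conn)+
  then show ?thesis using gC by blast
qed

lemma lc_eq:
  assumes C: "is_label_component k V E T C" and D: "is_label_component k V E T D"
    and a: "a \<in> C" and b: "b \<in> D" and ab: "a = b \<or> (col_adj V a b \<and> restrict a T = restrict b T)"
  shows "C = D"
proof -
  have c: "induces_connected V (C \<union> D)"
    using conn_union[of V C D a b] C D a b ab by (auto simp: is_label_component_def)
  have s: "same_label T (C \<union> D)"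
  proof (cases "a = b")
    case True then show ?thesis
      using same_label_union[of T C D a] C D a b by (auto simp: is_label_component_def)
  next
    case False then show ?thesis
      using same_label_adj_union[of T C D a b] C D a b ab by (auto simp: is_label_component_def)
  qed
  have "C \<union> D \<subseteq> colorings k V E" using C D by (auto simp: is_label_component_def)
  then have "C \<union> D = C" "C \<union> D = D" using C D c s unfolding is_label_component_def
    by (metis Un_upper1, metis Un_upper2)
  then show ?thesis by auto
qed

lemma lc_label:
  assumes C: "is_label_component k V E T C" and g: "g \<in> C"
  shows "restrict g T = csg_label T C"
proof -
  have "(SOME g. g \<in> C) \<in> C" using g by (rule someI[where P="\<lambda>g. g \<in> C"])
  moreover obtain L where "\<forall>x\<in>C. restrict x T = L" using C by (auto simp: is_label_component_def same_label_def)
  ultimately show ?thesis using g by (simp add: csg_label_def)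
qed

lemma iso_cert:
  assumes AN: "A \<subseteq> N \<times> N"
    and iso: "lg_iso N A l (csg_nodes k V E T) (csg_edges k V E T) (csg_label T)"
  shows "\<exists>S. is_certificate k V E T N A l S"
proof -
  obtain f where bij: "bij_betw f N (csg_nodes k V E T)"
    and ed: "\<forall>x\<in>N. \<forall>y\<in>N. (x, y) \<in> A \<longleftrightarrow> (f x, f y) \<in> csg_edges k V E T"
    and lb: "\<forall>x\<in>N. csg_label T (f x) = l x"
    using iso unfolding lg_iso_def by blast
  have lc: "is_label_component k V E T (f x)" if "x \<in> N" for x
    using bij that by (auto simp: bij_betw_def csg_nodes_def)
  have img: "f ` N = csg_nodes k V E T" using bij by (simp add: bij_betw_def)
  have inj: "inj_on f N" using bij by (simp add: bij_betw_def)
  have "is_certificate k V E T N A l f"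
  proof -
    have c1: "f x \<noteq> {}" if "x \<in> N" for x using lc[OF that] by (simp add: is_label_component_def)
    have c2: "(\<Union>x\<in>N. f x) = colorings k V E"
    proof
      show "(\<Union>x\<in>N. f x) \<subseteq> colorings k V E" using lc by (auto simp: is_label_component_def)
      show "colorings k V E \<subseteq> (\<Union>x\<in>N. f x)"
      proof
        fix g assume "g \<in> colorings k V E"
        then obtain C where "is_label_component k V E T C" "g \<in> C" using comp_lc by blast
        then have "C \<in> f ` N" using img by (simp add: csg_nodes_def)
        then show "g \<in> (\<Union>x\<in>N. f x)" using \<open>g \<in> C\<close> by blast
      qed
    qed
    have c3: "f x \<inter> f y = {}" if "x \<in> N" "y \<in> N" "x \<noteq> y" for x y
    proof (rule ccontr)
      assume "f x \<inter> f y \<noteq> {}"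
      then obtain g where "g \<in> f x" "g \<in> f y" by blast
      then have "f x = f y" by (intro lc_eq[OF lc[OF that(1)] lc[OF that(2)], of g g]) simp_all
      then show False using inj that by (meson inj_on_def)
    qed
    have c4: "restrict g T = l x" if "x \<in> N" "g \<in> f x" for x g
      using lc_label[OF lc[OF that(1)] that(2)] lb that(1) by simp
    have c5: "\<forall>(x, y)\<in>A. l x \<noteq> l y"
    proof (clarify)
      fix x y assume xy: "(x, y) \<in> A" and eq: "l x = l y"
      have x: "x \<in> N" and y: "y \<in> N" using AN xy by auto
      then have "(f x, f y) \<in> csg_edges k V E T" using ed xy by blast
      then obtain a b where ab: "a \<in> f x" "b \<in> f y" "col_adj V a b" "f x \<noteq> f y"
        by (auto simp: csg_edges_def)
      have "restrict a T = restrict b T"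
        using lc_label[OF lc[OF x] ab(1)] lc_label[OF lc[OF y] ab(2)] lb x y eq by simp
      then have "f x = f y" using ab(3) by (intro lc_eq[OF lc[OF x] lc[OF y] ab(1,2)]) simp
      then show False using ab(4) by simp
    qed
    have c6: "induces_connected V (f x)" if "x \<in> N" for x
      using lc[OF that] by (simp add: is_label_component_def)
    have c7: "(x, y) \<in> A \<longleftrightarrow> (\<exists>\<gamma>\<in>f x. \<exists>\<gamma>'\<in>f y. col_adj V \<gamma> \<gamma>')" if "x \<in> N" "y \<in> N" "x \<noteq> y" for x y
    proof -
      have "f x \<noteq> f y" using inj that by (meson inj_on_def)
      then show ?thesis using ed that lc by (auto simp: csg_edges_def csg_nodes_def)
    qed
    show ?thesis unfolding is_certificate_def
      apply (intro conjI)
      using c1 apply blast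
      using c2 apply blast
      using c3 apply blast
      using c4 apply blast
      using c5 apply blast
      using c6 apply blast
      using c7 apply blast
      done
  qed
  then show ?thesis by blast
qed



lemma restr_eq_iff: "restrict f A = restrict g A \<longleftrightarrow> (\<forall>x\<in>A. f x = g x)"
  by (auto simp: fun_eq_iff restrict_def)

lemma col_adj_iff: "col_adj V a b \<longleftrightarrow> (\<exists>v. {w \<in> V. a w \<noteq> b w} = {v})"
  by (simp add: col_adj_def card_1_singleton_iff)

locale jn =
  fixes V T V1 V2 :: "'v set" and E E1 E2 :: "('v \<times> 'v) set" and k :: nat
  assumes join: "is_join V E T V1 E1 V2 E2"
begin

lemma J: "V1 \<subseteq> V" "V2 \<subseteq> V" "V1 \<inter> V2 = T" "V1 \<union> V2 = V" "E1 = E \<inter> (V1 \<times> V1)"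
   "E2 = E \<inter> (V2 \<times> V2)" "E \<subseteq> E1 \<union> E2" "T \<subseteq> V1" "T \<subseteq> V2"
  using join by (auto simp: is_join_def induced_sub_def)

definition glue :: "('v \<Rightarrow> nat) \<Rightarrow> ('v \<Rightarrow> nat) \<Rightarrow> 'v \<Rightarrow> nat" where
  "glue a b = (\<lambda>w. if w \<in> V1 then a w else b w)"

lemma res_col1: "g \<in> colorings k V E \<Longrightarrow> restrict g V1 \<in> colorings k V1 E1"
  using J by (auto simp: colorings_def PiE_def Pi_def extensional_def)

lemma res_col2: "g \<in> colorings k V E \<Longrightarrow> restrict g V2 \<in> colorings k V2 E2"
  using J by (auto simp: colorings_def PiE_def Pi_def extensional_def)

lemma glue_col:
  assumes a: "a \<in> colorings k V1 E1" and b: "b \<in> colorings k V2 E2"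
    and ab: "restrict a T = restrict b T"
  shows "glue a b \<in> colorings k V E" "restrict (glue a b) V1 = a" "restrict (glue a b) V2 = b"
proof -
  have aT: "a w = b w" if "w \<in> T" for w using ab that by (simp add: restr_eq_iff)
  have ea: "a w = undefined" if "w \<notin> V1" for w using a that by (auto simp: colorings_def PiE_def extensional_def)
  have eb: "b w = undefined" if "w \<notin> V2" for w using b that by (auto simp: colorings_def PiE_def extensional_def)
  have ra: "a w \<in> {1..k}" if "w \<in> V1" for w using a that by (auto simp: colorings_def PiE_def)
  have rb: "b w \<in> {1..k}" if "w \<in> V2" for w using b that by (auto simp: colorings_def PiE_def)
  have ca: "a u \<noteq> a w" if "(u, w) \<in> E1" for u w using a that by (auto simp: colorings_def)
  have cb: "b u \<noteq> b w" if "(u, w) \<in> E2" for u w using b that by (auto simp: colorings_def)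
  show "restrict (glue a b) V1 = a" using ea by (auto simp: glue_def fun_eq_iff)
  show "restrict (glue a b) V2 = b" using eb aT J(3) by (auto simp: glue_def fun_eq_iff)
  have "glue a b \<in> V \<rightarrow>\<^sub>E {1..k}"
    using ra rb eb J(4) by (auto simp: glue_def PiE_def Pi_def extensional_def)
  moreover have "glue a b u \<noteq> glue a b w" if "(u, w) \<in> E" for u w
  proof -
    have "(u, w) \<in> E1 \<or> (u, w) \<in> E2" using that J(7) by blast
    then show ?thesis
    proof
      assume "(u, w) \<in> E1" then show ?thesis using ca J(5) by (auto simp: glue_def)
    next
      assume e: "(u, w) \<in> E2"
      then have "u \<in> V2" "w \<in> V2" using J(6) by auto
      then have "glue a b u = b u" "glue a b w = b w" using aT J(3) by (auto simp: glue_def)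
      then show ?thesis using cb e by simp
    qed
  qed
  ultimately show "glue a b \<in> colorings k V E" by (auto simp: colorings_def)
qed

lemma glue_res: "g \<in> colorings k V E \<Longrightarrow> glue (restrict g V1) (restrict g V2) = g"
  using J(4) by (auto simp: glue_def fun_eq_iff colorings_def PiE_def extensional_def)

lemma dset_split: "{w \<in> V. g w \<noteq> h w} =
   {w \<in> V1. restrict g V1 w \<noteq> restrict h V1 w} \<union> {w \<in> V2. restrict g V2 w \<noteq> restrict h V2 w}"
  using J(4) by auto

lemma dset1: "{w \<in> V1. restrict g V1 w \<noteq> restrict h V1 w} = {w \<in> V. g w \<noteq> h w} \<inter> V1"
  using J(1) by auto
lemma dset2: "{w \<in> V2. restrict g V2 w \<noteq> restrict h V2 w} = {w \<in> V. g w \<noteq> h w} \<inter> V2"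
  using J(2) by auto

lemma resT1: "restrict (restrict g V1) T = restrict g T" using J(8) by (simp add: Int_absorb1)
lemma resT2: "restrict (restrict g V2) T = restrict g T" using J(9) by (simp add: Int_absorb1)


lemma glue_adj:
  assumes "g \<in> colorings k V E" "h \<in> colorings k V E"
  shows "col_adj V g h \<longleftrightarrow> (\<exists>v. {w \<in> V1. restrict g V1 w \<noteq> restrict h V1 w} \<union>
                               {w \<in> V2. restrict g V2 w \<noteq> restrict h V2 w} = {v})"
  unfolding col_adj_iff dset_split[of g h] ..

context
  fixes N1 :: "'a set" and A1 l1 S1 and N2 :: "'b set" and A2 l2 S2
  assumes c1: "is_certificate k V1 E1 T N1 A1 l1 S1"
    and c2: "is_certificate k V2 E2 T N2 A2 l2 S2"
begin

definition S :: "'a \<times> 'b \<Rightarrow> ('v \<Rightarrow> nat) set" where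
  "S p = {g \<in> colorings k V E. restrict g V1 \<in> S1 (fst p) \<and> restrict g V2 \<in> S2 (snd p)}"

lemma in1: "x \<in> N1 \<Longrightarrow> a \<in> S1 x \<Longrightarrow> a \<in> colorings k V1 E1"
  using cert_union[OF c1] by blast
lemma in2: "y \<in> N2 \<Longrightarrow> b \<in> S2 y \<Longrightarrow> b \<in> colorings k V2 E2"
  using cert_union[OF c2] by blast

lemma glue_S:
  assumes x: "x \<in> N1" and y: "y \<in> N2" and a: "a \<in> S1 x" and b: "b \<in> S2 y" and l: "l1 x = l2 y"
  shows "glue a b \<in> S (x, y)"
proof -
  have "restrict a T = restrict b T" using cert_lab[OF c1 x a] cert_lab[OF c2 y b] l by simp
  note G = glue_col[OF in1[OF x a] in2[OF y b] this]
  show ?thesis using G a b by (simp add: S_def)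
qed

lemma S_lab: "x \<in> N1 \<Longrightarrow> g \<in> S (x, y) \<Longrightarrow> restrict g T = l1 x"
proof -
  assume "x \<in> N1" "g \<in> S (x, y)"
  then have "restrict (restrict g V1) T = l1 x" using cert_lab[OF c1] by (auto simp: S_def simp del: restrict_restrict)
  then show ?thesis using resT1[of g] by simp
qed
lemma S_lab2: "y \<in> N2 \<Longrightarrow> g \<in> S (x, y) \<Longrightarrow> restrict g T = l2 y"
proof -
  assume "y \<in> N2" "g \<in> S (x, y)"
  then have "restrict (restrict g V2) T = l2 y" using cert_lab[OF c2] by (auto simp: S_def simp del: restrict_restrict)
  then show ?thesis using resT2[of g] by simp
qed

lemma lift1:
  assumes x: "x \<in> N1" and y: "y \<in> N2" and b: "b \<in> S2 y" and l: "l1 x = l2 y"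
    and p: "(a0, a) \<in> (adjrel V1 (S1 x))\<^sup>*" and a0: "a0 \<in> S1 x"
  shows "(glue a0 b, glue a b) \<in> (adjrel V (S (x, y)))\<^sup>*"
  using p
proof (induction rule: rtrancl_induct)
  case base then show ?case by simp
next
  case (step a a')
  have aa: "a \<in> S1 x" "a' \<in> S1 x" "col_adj V1 a a'" using step.hyps(2) by (auto simp: adjrel_def)
  have ga: "glue a b \<in> S (x, y)" "glue a' b \<in> S (x, y)" using glue_S[OF x y _ b l] aa by auto
  have rt: "a \<in> colorings k V1 E1" "a' \<in> colorings k V1 E1" "b \<in> colorings k V2 E2"
    using in1[OF x] in2[OF y] aa b by auto
  have "restrict a T = restrict b T" "restrict a' T = restrict b T"
    using cert_lab[OF c1 x] cert_lab[OF c2 y b] aa l by auto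
  note G = glue_col[OF rt(1,3) this(1)] glue_col[OF rt(2,3) this(2)]
  have "col_adj V (glue a b) (glue a' b)"
    using glue_adj[OF G(1) G(4)] G aa(3) by (simp add: col_adj_iff)
  then have "(glue a b, glue a' b) \<in> adjrel V (S (x, y))" using ga by (simp add: adjrel_def)
  then show ?case using step.IH by simp
qed

lemma lift2:
  assumes x: "x \<in> N1" and y: "y \<in> N2" and a: "a \<in> S1 x" and l: "l1 x = l2 y"
    and p: "(b0, b) \<in> (adjrel V2 (S2 y))\<^sup>*"
  shows "(glue a b0, glue a b) \<in> (adjrel V (S (x, y)))\<^sup>*"
  using p
proof (induction rule: rtrancl_induct)
  case base then show ?case by simp
next
  case (step b b')
  have bb: "b \<in> S2 y" "b' \<in> S2 y" "col_adj V2 b b'" using step.hyps(2) by (auto simp: adjrel_def)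
  have ga: "glue a b \<in> S (x, y)" "glue a b' \<in> S (x, y)" using glue_S[OF x y a _ l] bb by auto
  have rt: "a \<in> colorings k V1 E1" "b \<in> colorings k V2 E2" "b' \<in> colorings k V2 E2"
    using in1[OF x] in2[OF y] bb a by auto
  have "restrict a T = restrict b T" "restrict a T = restrict b' T"
    using cert_lab[OF c1 x a] cert_lab[OF c2 y] bb l by auto
  note G = glue_col[OF rt(1,2) this(1)] glue_col[OF rt(1,3) this(2)]
  have "col_adj V (glue a b) (glue a b')"
    using glue_adj[OF G(1) G(4)] G bb(3) by (simp add: col_adj_iff)
  then have "(glue a b, glue a b') \<in> adjrel V (S (x, y))" using ga by (simp add: adjrel_def)
  then show ?case using step.IH by simp
qed

lemma S_conn:
  assumes x: "x \<in> N1" and y: "y \<in> N2" and l: "l1 x = l2 y"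
  shows "induces_connected V (S (x, y))"
  unfolding ic_iff
proof (intro ballI)
  fix g h assume g: "g \<in> S (x, y)" and h: "h \<in> S (x, y)"
  have gi: "g \<in> colorings k V E" "restrict g V1 \<in> S1 x" "restrict g V2 \<in> S2 y" using g by (auto simp: S_def)
  have hi: "h \<in> colorings k V E" "restrict h V1 \<in> S1 x" "restrict h V2 \<in> S2 y" using h by (auto simp: S_def)
  have p1: "(restrict g V1, restrict h V1) \<in> (adjrel V1 (S1 x))\<^sup>*"
    using cert_conn[OF c1 x] gi hi by (auto simp: ic_iff)
  have p2: "(restrict g V2, restrict h V2) \<in> (adjrel V2 (S2 y))\<^sup>*"
    using cert_conn[OF c2 y] gi hi by (auto simp: ic_iff)
  have "(glue (restrict g V1) (restrict g V2), glue (restrict h V1) (restrict g V2)) \<in> (adjrel V (S (x, y)))\<^sup>*"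
    by (rule lift1[OF x y gi(3) l p1 gi(2)])
  moreover have "(glue (restrict h V1) (restrict g V2), glue (restrict h V1) (restrict h V2)) \<in> (adjrel V (S (x, y)))\<^sup>*"
    by (rule lift2[OF x y hi(2) l p2])
  ultimately show "(g, h) \<in> (adjrel V (S (x, y)))\<^sup>*"
    using glue_res[OF gi(1)] glue_res[OF hi(1)] by simp
qed


abbreviation "P \<equiv> prod_nodes N1 l1 N2 l2"

lemma P_iff: "(x, y) \<in> P \<longleftrightarrow> x \<in> N1 \<and> y \<in> N2 \<and> l1 x = l2 y"
  by (simp add: prod_nodes_def)

lemma prod_cert:
  "is_certificate k V E T P (prod_edges N1 A1 l1 N2 A2 l2) (prod_label l1) S"
proof -
  have q1: "S p \<noteq> {}" if hp: "p \<in> P" for p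
  proof -
    obtain x y where p: "p = (x, y)" "x \<in> N1" "y \<in> N2" "l1 x = l2 y" using hp P_iff by (cases p) auto
    obtain a b where "a \<in> S1 x" "b \<in> S2 y" using cert_ne[OF c1 p(2)] cert_ne[OF c2 p(3)] by blast
    then show ?thesis using glue_S[OF p(2,3) _ _ p(4)] p(1) by blast
  qed
  have q2: "(\<Union>p\<in>P. S p) = colorings k V E"
  proof
    show "(\<Union>p\<in>P. S p) \<subseteq> colorings k V E" by (auto simp: S_def)
    show "colorings k V E \<subseteq> (\<Union>p\<in>P. S p)"
    proof
      fix g assume g: "g \<in> colorings k V E"
      obtain x where x: "x \<in> N1" "restrict g V1 \<in> S1 x" using res_col1[OF g] cert_union[OF c1] by blast
      obtain y where y: "y \<in> N2" "restrict g V2 \<in> S2 y" using res_col2[OF g] cert_union[OF c2] by blast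
      have gS: "g \<in> S (x, y)" using g x y by (simp add: S_def)
      have "l1 x = l2 y" using S_lab[OF x(1) gS] S_lab2[OF y(1) gS] by simp
      then have "(x, y) \<in> P" using x y P_iff by blast
      then show "g \<in> (\<Union>p\<in>P. S p)" using gS by blast
    qed
  qed
  have q3: "S p \<inter> S q = {}" if "p \<in> P" "q \<in> P" "p \<noteq> q" for p q
  proof (rule ccontr)
    assume "S p \<inter> S q \<noteq> {}"
    then obtain g where g: "g \<in> S p" "g \<in> S q" by blast
    obtain x y x' y' where pq: "p = (x, y)" "q = (x', y')" by (cases p, cases q) auto
    have m: "x \<in> N1" "y \<in> N2" "x' \<in> N1" "y' \<in> N2" using that pq P_iff by auto
    have "x \<noteq> x' \<or> y \<noteq> y'" using that pq by auto
    then show False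
    proof
      assume "x \<noteq> x'"
      then show False using cert_disj[OF c1 m(1,3)] g pq by (auto simp: S_def)
    next
      assume "y \<noteq> y'"
      then show False using cert_disj[OF c2 m(2,4)] g pq by (auto simp: S_def)
    qed
  qed
  have q4: "restrict g T = prod_label l1 p" if "p \<in> P" "g \<in> S p" for p g
    using that S_lab P_iff by (cases p) (auto simp: prod_label_def)
  have q5: "\<forall>(p, q)\<in>prod_edges N1 A1 l1 N2 A2 l2. prod_label l1 p \<noteq> prod_label l1 q"
    using cert_edgelab[OF c1] by (auto simp: prod_edges_def prod_label_def)
  have q6: "induces_connected V (S p)" if "p \<in> P" for p
    using that S_conn P_iff by (cases p) auto
  have q7: "(p, q) \<in> prod_edges N1 A1 l1 N2 A2 l2 \<longleftrightarrow> (\<exists>\<gamma>\<in>S p. \<exists>\<gamma>'\<in>S q. col_adj V \<gamma> \<gamma>')"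
    if hpq: "p \<in> P" "q \<in> P" "p \<noteq> q" for p q
  proof -
    obtain x y x' y' where pq: "p = (x, y)" "q = (x', y')" by (cases p, cases q) auto
    have m: "x \<in> N1" "y \<in> N2" "x' \<in> N1" "y' \<in> N2" "l1 x = l2 y" "l1 x' = l2 y'"
      using hpq pq P_iff by auto
    show ?thesis
    proof
      assume "(p, q) \<in> prod_edges N1 A1 l1 N2 A2 l2"
      then have e: "(x, x') \<in> A1" "(y, y') \<in> A2" using pq by (auto simp: prod_edges_def)
      have ne: "l1 x \<noteq> l1 x'" "l2 y \<noteq> l2 y'" using cert_edgelab[OF c1 e(1)] cert_edgelab[OF c2 e(2)] .
      then have "x \<noteq> x'" "y \<noteq> y'" by auto
      then obtain a a' b b' where ab: "a \<in> S1 x" "a' \<in> S1 x'" "col_adj V1 a a'"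
        "b \<in> S2 y" "b' \<in> S2 y'" "col_adj V2 b b'"
        using cert_adj[OF c1 m(1,3)] cert_adj[OF c2 m(2,4)] e by blast
      obtain v where v: "{w \<in> V1. a w \<noteq> a' w} = {v}" using ab(3) col_adj_iff by metis
      obtain v' where v': "{w \<in> V2. b w \<noteq> b' w} = {v'}" using ab(6) col_adj_iff by metis
      have la: "restrict a T = l1 x" "restrict a' T = l1 x'" "restrict b T = l2 y" "restrict b' T = l2 y'"
        using cert_lab[OF c1 m(1) ab(1)] cert_lab[OF c1 m(3) ab(2)] cert_lab[OF c2 m(2) ab(4)]
          cert_lab[OF c2 m(4) ab(5)] .
      have "restrict a T \<noteq> restrict a' T" using la(1,2) ne(1) by simp
      then obtain t where t: "t \<in> T" "a t \<noteq> a' t" unfolding restr_eq_iff by blast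
      then have "t \<in> {w \<in> V1. a w \<noteq> a' w}" using J(8) by auto
      then have tv: "t = v" using v by auto
      have "b t = a t" "b' t = a' t" using la m(5,6) t(1) by (metis restr_eq_iff)+
      then have "t \<in> {w \<in> V2. b w \<noteq> b' w}" using t J(9) by auto
      then have tv': "t = v'" using v' by auto
      have g1: "glue a b \<in> S (x, y)" "glue a' b' \<in> S (x', y')"
        using glue_S[OF m(1,2) ab(1,4) m(5)] glue_S[OF m(3,4) ab(2,5) m(6)] .
      have c: "glue a b \<in> colorings k V E" "glue a' b' \<in> colorings k V E"
        using g1 by (auto simp: S_def)
      have "restrict (glue a b) V1 = a" "restrict (glue a b) V2 = b"
        "restrict (glue a' b') V1 = a'" "restrict (glue a' b') V2 = b'"
        using glue_col[OF in1[OF m(1) ab(1)] in2[OF m(2) ab(4)]] glue_col[OF in1[OF m(3) ab(2)] in2[OF m(4) ab(5)]]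
          la m(5,6) by auto
      then have "col_adj V (glue a b) (glue a' b')"
        using glue_adj[OF c(1,2)] v v' tv tv' by auto
      then show "\<exists>\<gamma>\<in>S p. \<exists>\<gamma>'\<in>S q. col_adj V \<gamma> \<gamma>'" using g1 pq by blast
    next
      assume "\<exists>\<gamma>\<in>S p. \<exists>\<gamma>'\<in>S q. col_adj V \<gamma> \<gamma>'"
      then obtain g g' where g: "g \<in> S (x, y)" "g' \<in> S (x', y')" "col_adj V g g'" using pq by blast
      obtain v where v: "{w \<in> V. g w \<noteq> g' w} = {v}" using g(3) col_adj_iff by metis
      have vV: "v \<in> V" using v by auto
      have gi: "restrict g V1 \<in> S1 x" "restrict g V2 \<in> S2 y" "restrict g' V1 \<in> S1 x'" "restrict g' V2 \<in> S2 y'"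
        using g by (auto simp: S_def)
      have lg: "restrict g T = l1 x" "restrict g' T = l1 x'"
        using S_lab[OF m(1) g(1)] S_lab[OF m(3) g(2)] .
      have D1: "{w \<in> V1. restrict g V1 w \<noteq> restrict g' V1 w} = {v} \<inter> V1" by (simp only: dset1 v)
      have D2: "{w \<in> V2. restrict g V2 w \<noteq> restrict g' V2 w} = {v} \<inter> V2" by (simp only: dset2 v)
      show "(p, q) \<in> prod_edges N1 A1 l1 N2 A2 l2"
      proof (cases "v \<in> T")
        case True
        then have "v \<in> V1" "v \<in> V2" using J(8,9) by auto
        then have a1: "col_adj V1 (restrict g V1) (restrict g' V1)" "col_adj V2 (restrict g V2) (restrict g' V2)"
          using D1 D2 col_adj_iff by (metis Int_absorb2 empty_subsetI insert_subset)+
        have "g v \<noteq> g' v" using v by auto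
        then have "l1 x \<noteq> l1 x'" using lg True by (metis restr_eq_iff)
        then have xx: "x \<noteq> x'" "y \<noteq> y'" using m by auto
        have "(x, x') \<in> A1" using cert_adj[OF c1 m(1,3) xx(1)] a1(1) gi by blast
        moreover have "(y, y') \<in> A2" using cert_adj[OF c2 m(2,4) xx(2)] a1(2) gi by blast
        ultimately show ?thesis using hpq pq by (auto simp: prod_edges_def)
      next
        case False
        have "restrict g T = restrict g' T"
          unfolding restr_eq_iff
        proof
          fix t assume t: "t \<in> T"
          then have "t \<in> V" using J(1,8) by auto
          show "g t = g' t"
          proof (rule ccontr)
            assume "g t \<noteq> g' t"
            then have "t \<in> {w \<in> V. g w \<noteq> g' w}" using \<open>t \<in> V\<close> by auto
            then show False using v t False by auto
          qed
        qed
        then have ll: "l1 x = l1 x'" "l2 y = l2 y'" using lg m by auto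
        have "v \<in> V1 - T \<or> v \<in> V2 - T" using vV False J(4) by auto
        then show ?thesis
        proof
          assume vv: "v \<in> V1 - T"
          then have "v \<notin> V2" using J(3) by auto
          then have "restrict g V2 = restrict g' V2" using D2 by (auto simp: restr_eq_iff)
          then have "y = y'" using cert_disj[OF c2 m(2,4)] gi by auto
          then have xx: "x \<noteq> x'" using hpq pq by auto
          have "{v} \<inter> V1 = {v}" using vv by auto
          then have "col_adj V1 (restrict g V1) (restrict g' V1)" unfolding col_adj_iff D1 by blast
          then have "(x, x') \<in> A1" using cert_adj[OF c1 m(1,3) xx] gi by blast
          then show ?thesis using cert_edgelab[OF c1] ll by auto
        next
          assume vv: "v \<in> V2 - T"
          then have "v \<notin> V1" using J(3) by auto
          then have "restrict g V1 = restrict g' V1" using D1 by (auto simp: restr_eq_iff)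
          then have "x = x'" using cert_disj[OF c1 m(1,3)] gi by auto
          then have yy: "y \<noteq> y'" using hpq pq by auto
          have "{v} \<inter> V2 = {v}" using vv by auto
          then have "col_adj V2 (restrict g V2) (restrict g' V2)" unfolding col_adj_iff D2 by blast
          then have "(y, y') \<in> A2" using cert_adj[OF c2 m(2,4) yy] gi by blast
          then show ?thesis using cert_edgelab[OF c2] ll by auto
        qed
      qed
    qed
  qed
  show ?thesis unfolding is_certificate_def
    apply (intro conjI)
    using q1 apply blast
    using q2 apply blast
    using q3 apply blast
    using q4 apply blast
    using q5 apply blast
    using q6 apply blast
    using q7 apply blast
    done
qed

lemma prod_cert_ex:
  "\<exists>S. is_certificate k V E T P (prod_edges N1 A1 l1 N2 A2 l2) (prod_label l1) S \<and>
     (\<forall>\<gamma>\<in>colorings k V E. \<forall>x\<in>N1. \<forall>y\<in>N2.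
        restrict \<gamma> V1 \<in> S1 x \<longrightarrow> restrict \<gamma> V2 \<in> S2 y \<longrightarrow> \<gamma> \<in> S (x, y))"
  using prod_cert by (intro exI[of _ S]) (auto simp: S_def)

end
end

theorem lemma4:
  fixes V T V1 V2 :: "'v set" and E E1 E2 :: "('v \<times> 'v) set" and k :: nat
    and N1 :: "'a set" and A1 :: "('a \<times> 'a) set" and l1 :: "'a \<Rightarrow> ('v \<Rightarrow> nat)"
    and N2 :: "'b set" and A2 :: "('b \<times> 'b) set" and l2 :: "'b \<Rightarrow> ('v \<Rightarrow> nat)"
  assumes join: "is_join V E T V1 E1 V2 E2"
    and k: "0 < k"
    and H1: "lgraph N1 A1"
      "lg_iso N1 A1 l1 (csg_nodes k V1 E1 T) (csg_edges k V1 E1 T) (csg_label T)"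
    and H2: "lgraph N2 A2"
      "lg_iso N2 A2 l2 (csg_nodes k V2 E2 T) (csg_edges k V2 E2 T) (csg_label T)"
  shows "lg_iso (prod_nodes N1 l1 N2 l2) (prod_edges N1 A1 l1 N2 A2 l2) (prod_label l1)
            (csg_nodes k V E T) (csg_edges k V E T) (csg_label T)
       \<and> (\<forall>S1 S2. is_certificate k V1 E1 T N1 A1 l1 S1 \<and> is_certificate k V2 E2 T N2 A2 l2 S2 \<longrightarrow>
            (\<exists>S. is_certificate k V E T (prod_nodes N1 l1 N2 l2) (prod_edges N1 A1 l1 N2 A2 l2)
                    (prod_label l1) S \<and>
                 (\<forall>\<gamma>\<in>colorings k V E. \<forall>x\<in>N1. \<forall>y\<in>N2.
                    restrict \<gamma> V1 \<in> S1 x \<longrightarrow> restrict \<gamma> V2 \<in> S2 y \<longrightarrow> \<gamma> \<in> S (x, y))))"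
proof -
  interpret jn V T V1 V2 E E1 E2 k using join by unfold_locales
  have s2: "\<forall>S1 S2. is_certificate k V1 E1 T N1 A1 l1 S1 \<and> is_certificate k V2 E2 T N2 A2 l2 S2 \<longrightarrow>
            (\<exists>S. is_certificate k V E T (prod_nodes N1 l1 N2 l2) (prod_edges N1 A1 l1 N2 A2 l2)
                    (prod_label l1) S \<and>
                 (\<forall>\<gamma>\<in>colorings k V E. \<forall>x\<in>N1. \<forall>y\<in>N2.
                    restrict \<gamma> V1 \<in> S1 x \<longrightarrow> restrict \<gamma> V2 \<in> S2 y \<longrightarrow> \<gamma> \<in> S (x, y)))"
    using prod_cert_ex by blast
  have "A1 \<subseteq> N1 \<times> N1" using H1(1) by (simp add: lgraph_def)
  then obtain S1 where S1: "is_certificate k V1 E1 T N1 A1 l1 S1" using iso_cert[OF _ H1(2)] by blast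
  have "A2 \<subseteq> N2 \<times> N2" using H2(1) by (simp add: lgraph_def)
  then obtain S2 where S2: "is_certificate k V2 E2 T N2 A2 l2 S2" using iso_cert[OF _ H2(2)] by blast
  obtain S where "is_certificate k V E T (prod_nodes N1 l1 N2 l2) (prod_edges N1 A1 l1 N2 A2 l2) (prod_label l1) S"
    using s2 S1 S2 by blast
  then have "lg_iso (prod_nodes N1 l1 N2 l2) (prod_edges N1 A1 l1 N2 A2 l2) (prod_label l1)
            (csg_nodes k V E T) (csg_edges k V E T) (csg_label T)" by (rule cert_iso)
  then show ?thesis using s2 by blast
qed

end
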